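(* For every integer $n\ge 2$ and every nonzero real $x$, $$O_{n}'(x)+\frac{n}{x}O_{n}(x)=\sum_{j=0}^{\lfloor (n-2)/2\rfloor}\frac{n-1-2j}{x^{2j+1}}\,O_{n-1-2j}(x),$$ where $O_n'$ denotes the derivative of $O_n$ with respect to $x$.
   Context: For a nonzero real number $x$, the Oresme polynomials $O_n(x)$, $n\ge 0$, are defined by $O_{0}(x)=0$, $O_{1}(x)=\frac{1}{x}$, and $O_{n+1}(x)=O_{n}(x)-\frac{1}{x^{2}}O_{n-1}(x)$ for all $n\ge 1$; each $O_n$ is thus a rational function of $x$ (a polynomial in $1/x$), differentiable on $x\neq 0$. *)

theory Defs
  imports "HOL-Analysis.Analysis"
begin

fun oresme :: "nat \<Rightarrow> real \<Rightarrow> real" where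
  "oresme 0 x = 0"
| "oresme (Suc 0) x = 1 / x"
| "oresme (Suc (Suc n)) x = oresme (Suc n) x - (1 / x^2) * oresme n x"

end

theory Submission
  imports Defs
begin

fun od :: "nat \<Rightarrow> real \<Rightarrow> real" where
  "od 0 x = 0"
| "od (Suc 0) x = - 1 / x^2"
| "od (Suc (Suc n)) x = od (Suc n) x - (1 / x^2) * od n x + 2 / x^3 * oresme n x"

lemma od_deriv: "x \<noteq> 0 \<Longrightarrow> (oresme n has_real_derivative od n x) (at x)"
proof (induction n x rule: oresme.induct)
  case (1 x) then show ?case by simp
next
  case (2 x)
  have e: "oresme (Suc 0) = (\<lambda>x. 1 / x)" by (rule ext) simp
  show ?case unfolding e using 2
    by (auto intro!: derivative_eq_intros simp: power2_eq_square)
next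
  case (3 n x)
  have e: "oresme (Suc (Suc n)) = (\<lambda>x. oresme (Suc n) x - (1 / x^2) * oresme n x)" by (rule ext) simp
  show ?case unfolding e using 3
    by (auto intro!: derivative_eq_intros simp: field_simps power2_eq_square power3_eq_cube)
qed

definition S :: "nat \<Rightarrow> real \<Rightarrow> real" where
  "S n x = (\<Sum>j<n div 2. (real (n - 1 - 2*j) / x^(2*j+1)) * oresme (n - 1 - 2*j) x)"

lemma S_rec: "S (Suc (Suc n)) x = real (n+1) / x * oresme (n+1) x + S n x / x^2"
proof -
  have "S (Suc (Suc n)) x = (\<Sum>j<Suc (n div 2). (real (n + 1 - 2*j) / x^(2*j+1)) * oresme (n + 1 - 2*j) x)"
    unfolding S_def by simp
  also have "\<dots> = real (n+1) / x * oresme (n+1) x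
     + (\<Sum>j<n div 2. (real (n + 1 - 2*Suc j) / x^(2*Suc j+1)) * oresme (n + 1 - 2*Suc j) x)"
    by (subst sum.lessThan_Suc_shift) simp
  also have "(\<Sum>j<n div 2. (real (n + 1 - 2*Suc j) / x^(2*Suc j+1)) * oresme (n + 1 - 2*Suc j) x)
     = S n x / x^2"
    unfolding S_def sum_divide_distrib
    by (rule sum.cong) (auto simp: field_simps power2_eq_square)
  finally show ?thesis .
qed

lemma S0: "S 0 x = 0" and S1: "S 1 x = 0" by (simp_all add: S_def)

lemma T: "x \<noteq> 0 \<Longrightarrow> S (Suc n) x = real n / x * oresme (Suc n) x + 2 * S n x / x^2"
proof (induction n rule: nat_less_induct)
  case (1 n)
  show ?case
  proof (cases n)
    case 0 then show ?thesis by (simp add: S_def)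
  next
    case (Suc m)
    show ?thesis
    proof (cases m)
      case 0 then show ?thesis using Suc 1(2)
        by (simp add: S_def power2_eq_square eval_nat_numeral)
    next
      case (Suc k)
      have IH: "S (Suc k) x = real k / x * oresme (Suc k) x + 2 * S k x / x^2"
        using 1 Suc \<open>n = Suc m\<close> by auto
      have a: "S (Suc (Suc (Suc k))) x = real (Suc k+1) / x * oresme (Suc k+1) x + S (Suc k) x / x^2"
        by (rule S_rec)
      have b: "S (Suc (Suc k)) x = real (k+1) / x * oresme (k+1) x + S k x / x^2"
        by (rule S_rec)
      show ?thesis using a b IH 1(2) \<open>n = Suc m\<close> Suc
        by (simp add: field_simps power2_eq_square power3_eq_cube)
    qed
  qed
qed

lemma L: "x \<noteq> 0 \<Longrightarrow> od n x + real n / x * oresme n x = S n x"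
proof (induction n rule: nat_less_induct)
  case (1 n)
  show ?case
  proof (cases n)
    case 0 then show ?thesis by (simp add: S_def)
  next
    case (Suc m)
    show ?thesis
    proof (cases m)
      case 0 then show ?thesis using Suc 1(2)
        by (simp add: S_def power2_eq_square)
    next
      case (Suc k)
      have I1: "od (Suc k) x + real (Suc k) / x * oresme (Suc k) x = S (Suc k) x"
        using 1 Suc \<open>n = Suc m\<close> by auto
      have I0: "od k x + real k / x * oresme k x = S k x"
        using 1 Suc \<open>n = Suc m\<close> by auto
      have a: "S (Suc (Suc k)) x = real (k+1) / x * oresme (k+1) x + S k x / x^2"
        by (rule S_rec)
      have t: "S (Suc k) x = real k / x * oresme (Suc k) x + 2 * S k x / x^2"
        using T 1(2) by blast
      have d1: "od (Suc k) x = S (Suc k) x - real (Suc k) / x * oresme (Suc k) x" using I1 by simp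
      have d0: "od k x = S k x - real k / x * oresme k x" using I0 by simp
      have "od n x + real n / x * oresme n x
          = od (Suc k) x - (1 / x^2) * od k x + 2 / x^3 * oresme k x
            + real (k+2) / x * (oresme (Suc k) x - (1 / x^2) * oresme k x)"
        using \<open>n = Suc m\<close> Suc by simp
      also have "\<dots> = S (Suc (Suc k)) x"
        unfolding a d1 d0 t using 1(2)
        by (simp add: field_simps power2_eq_square power3_eq_cube)
      finally show ?thesis using \<open>n = Suc m\<close> Suc by simp
    qed
  qed
qed

theorem mainTheorem13:
  fixes n :: nat and x :: real
  assumes "n \<ge> 2" and "x \<noteq> 0"
  shows "deriv (oresme n) x + (real n / x) * oresme n x
       = (\<Sum>j = 0..(n - 2) div 2. (real (n - 1 - 2*j) / x^(2*j+1)) * oresme (n - 1 - 2*j) x)"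
proof -
  have d: "deriv (oresme n) x = od n x" using od_deriv[OF assms(2)] by (rule DERIV_imp_deriv)
  obtain m where m: "n = m + 2" using assms(1) le_Suc_ex by (metis add.commute)
  have "{0..(n - 2) div 2} = {..<n div 2}" using m by auto
  then show ?thesis using L[OF assms(2), of n] d unfolding S_def by simp
qed

end
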